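(* Let $0\le q<N$, $n\ge1$, and let $c\in H^q(\mathcal{E}_0^\bullet\otimes_{\mathcal{O}}\mathcal{O}/\mathfrak{m}_0^n)$ satisfy $o_n^q(c)\ne0$. Then there exist an integer $n'$ with $1\le n'\le n$ and a class $c'\in H^q(\mathcal{E}_0^\bullet\otimes_{\mathcal{O}}\mathcal{O}/\mathfrak{m}_0^{n'})$ such that $$o^q_{n',n'-1}(c')=\rho^{q+1}_{n'-1}\big(o_n^q(c)\big)\neq 0\quad\text{in } H^{q+1}(\mathcal{E}_0^\bullet\otimes_{\mathcal{O}}\mathcal{O}/\mathfrak{m}_0^{n'}).$$
   Context: Setting. Let $B$ be a one-dimensional complex manifold (a disc) with holomorphic coordinate $t$ centred at a point $0\in B$; write $\mathcal{O}=\mathcal{O}_{B,0}$ and $\mathfrak{m}_0=t\mathcal{O}$ for its maximal ideal. Let $(E^\bullet,d^\bullet)$: $0\to E^0\xrightarrow{d^0}E^1\xrightarrow{d^1}\cdots\xrightarrow{d^{N-1}}E^N\to 0$ be a bounded complex of holomorphic vector bundles on $B$ whose differentials are $\mathcal{O}_B$-linear holomorphic bundle maps with $d^{q+1}\circ d^q=0$. For $s\in B$, $E_s^\bullet$ denotes the fibre complex (with differentials $d^q_s$) and $H^q(E_s)=\ker d^q_s/\mathrm{im}\, d^{q-1}_s$. Let $\mathcal{E}_0^q$ be the stalk at $0$ of the sheaf of holomorphic sections of $E^q$; for a germ $s$, $s(0)$ is its value at $0$. For $n\ge1$, $\mathcal{E}_0^\bullet\otimes_{\mathcal{O}}\mathcal{O}/\mathfrak{m}_0^n$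 is the induced truncated complex with cohomology $H^q(\mathcal{E}_0^\bullet\otimes_{\mathcal{O}}\mathcal{O}/\mathfrak{m}_0^n)$. Obstruction maps. $o_n^q:H^q(\mathcal{E}_0^\bullet\otimes\mathcal{O}/\mathfrak{m}_0^n)\to H^{q+1}(E_0)$ sends the class of $\tilde\alpha \bmod t^n$ (where $\tilde\alpha\in\mathcal{E}_0^q$ with $d^q\tilde\alpha\in t^n\mathcal{E}_0^{q+1}$) to the class of $(t^{-n}d^q\tilde\alpha)(0)$ (this is well defined). For $i\ge 0$, $\rho_i^q:H^q(E_0)\to H^q(\mathcal{E}_0^\bullet\otimes\mathcal{O}/\mathfrak{m}_0^{i+1})$ is $[\sigma]\mapsto[t^i\tilde\sigma \bmod t^{i+1}]$, where $\tilde\sigma$ is any germ with $\tilde\sigma(0)=\sigma$. For $0\le i\le n$ set $o^q_{n,i}=\rho_i^{q+1}\circ o_n^q: H^q(\mathcal{E}_0^\bullet\otimes\mathcal{O}/\mathfrak{m}_0^n)\to H^{q+1}(\mathcal{E}_0^\bullet\otimes\mathcal{O}/\mathfrak{m}_0^{i+1})$. *)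

theory Defs
  imports "HOL-Analysis.Analysis"
begin

text \<open>The base B is the disc ball 0 R (coordinate t = z).  The bundle E^q is
  (holomorphically trivialised as) B x C^(r q); fibre vectors are functions nat => complex
  vanishing at indices >= r q.  The differential d^q is a matrix D q z of holomorphic
  functions of z, of size r(q+1) x r(q).  Germs at 0 are represented by functions holomorphic
  on some ball around 0, compared up to eventual equality near 0.\<close>

definition vec :: "nat \<Rightarrow> (nat \<Rightarrow> complex) \<Rightarrow> bool" where
  "vec m x \<longleftrightarrow> (\<forall>i\<ge>m. x i = 0)"

definition app :: "nat \<Rightarrow> nat \<Rightarrow> (nat \<Rightarrow> nat \<Rightarrow> complex) \<Rightarrow> (nat \<Rightarrow> complex) \<Rightarrow> nat \<Rightarrow> complex" where
  "app m k M x = (\<lambda>i. if i < k then (\<Sum>j<m. M i j * x j) else 0)"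

text \<open>A bounded complex 0 -> E^0 -> ... -> E^N -> 0 of (trivial) holomorphic bundles on B.\<close>
definition is_hol_complex ::
  "complex set \<Rightarrow> nat \<Rightarrow> (nat \<Rightarrow> nat) \<Rightarrow> (nat \<Rightarrow> complex \<Rightarrow> nat \<Rightarrow> nat \<Rightarrow> complex) \<Rightarrow> bool" where
  "is_hol_complex B N r D \<longleftrightarrow>
     (\<forall>q>N. r q = 0) \<and>
     (\<forall>q i j. (\<lambda>z. D q z i j) holomorphic_on B) \<and>
     (\<forall>q z x. z \<in> B \<longrightarrow>
        app (r (Suc q)) (r (Suc (Suc q))) (D (Suc q) z) (app (r q) (r (Suc q)) (D q z) x) = (\<lambda>_. 0))"

definition germ :: "(nat \<Rightarrow> nat) \<Rightarrow> nat \<Rightarrow> (complex \<Rightarrow> nat \<Rightarrow> complex) \<Rightarrow> bool" where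
  "germ r q s \<longleftrightarrow> (\<exists>e>0. (\<forall>i. (\<lambda>z. s z i) holomorphic_on ball 0 e)) \<and> (\<forall>z. vec (r q) (s z))"

definition evq :: "(complex \<Rightarrow> nat \<Rightarrow> complex) \<Rightarrow> (complex \<Rightarrow> nat \<Rightarrow> complex) \<Rightarrow> bool" where
  "evq f g \<longleftrightarrow> eventually (\<lambda>z. f z = g z) (nhds 0)"

definition tpow :: "nat \<Rightarrow> (complex \<Rightarrow> nat \<Rightarrow> complex) \<Rightarrow> complex \<Rightarrow> nat \<Rightarrow> complex" where
  "tpow n s = (\<lambda>z i. z ^ n * s z i)"

definition dsec :: "(nat \<Rightarrow> nat) \<Rightarrow> (nat \<Rightarrow> complex \<Rightarrow> nat \<Rightarrow> nat \<Rightarrow> complex) \<Rightarrow> nat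
     \<Rightarrow> (complex \<Rightarrow> nat \<Rightarrow> complex) \<Rightarrow> complex \<Rightarrow> nat \<Rightarrow> complex" where
  "dsec r D q s = (\<lambda>z. app (r q) (r (Suc q)) (D q z) (s z))"

text \<open>u lies in t^n E^q_0.\<close>
definition divisible :: "(nat \<Rightarrow> nat) \<Rightarrow> nat \<Rightarrow> nat \<Rightarrow> (complex \<Rightarrow> nat \<Rightarrow> complex) \<Rightarrow> bool" where
  "divisible r q n u \<longleftrightarrow> (\<exists>v. germ r q v \<and> evq u (tpow n v))"

text \<open>Cocycles of E_0 (x) O/m^n in degree q (represented by germs).\<close>
definition tcyc where
  "tcyc r D q n s \<longleftrightarrow> germ r q s \<and> divisible r (Suc q) n (dsec r D q s)"

text \<open>Cohomologous mod (image of d^(q-1)) + t^n E^q_0.\<close>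
definition trel where
  "trel r D q n = {(s, s'). tcyc r D q n s \<and> tcyc r D q n s' \<and>
      (\<exists>g w. germ r (q - 1) g \<and> germ r q w \<and>
         evq (\<lambda>z i. s z i - s' z i)
             (\<lambda>z i. (if q = 0 then 0 else dsec r D (q - 1) g z i) + z ^ n * w z i))}"

text \<open>H^q(E_0 (x) O/m^n).\<close>
definition Htrunc where
  "Htrunc r D q n = {s. tcyc r D q n s} // trel r D q n"

definition tclass where
  "tclass r D q n s = trel r D q n `` {s}"

definition tzero where
  "tzero r D q n = tclass r D q n (\<lambda>z i. 0)"

text \<open>Fibre complex at 0 and its cohomology H^q(E_0).\<close>
definition fcyc where
  "fcyc r D q x \<longleftrightarrow> vec (r q) x \<and> app (r q) (r (Suc q)) (D q 0) x = (\<lambda>_. 0)"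

definition frel where
  "frel r D q = {(x, y). fcyc r D q x \<and> fcyc r D q y \<and>
      (\<exists>y'. vec (r (q - 1)) y' \<and>
         (\<lambda>i. x i - y i) = (if q = 0 then (\<lambda>_. 0) else app (r (q - 1)) (r q) (D (q - 1) 0) y'))}"

definition Hfib where
  "Hfib r D q = {x. fcyc r D q x} // frel r D q"

definition fclass where
  "fclass r D q x = frel r D q `` {x}"

definition fzero where
  "fzero r D q = fclass r D q (\<lambda>_. 0)"

text \<open>Obstruction map o_n^q : H^q(E_0 (x) O/m^n) -> H^(q+1)(E_0),
  [alpha mod t^n] |-> [(t^-n d alpha)(0)].\<close>
definition obs where
  "obs r D q n c = fclass r D (Suc q)
     ((SOME v. germ r (Suc q) v \<and> (\<exists>s\<in>c. evq (dsec r D q s) (tpow n v))) 0)"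

text \<open>rho_i^q : H^q(E_0) -> H^q(E_0 (x) O/m^(i+1)),  [sigma] |-> [t^i sigma mod t^(i+1)]
  (sigma extended as a constant germ).\<close>
definition rho where
  "rho r D q i C = tclass r D q (Suc i) (\<lambda>z j. z ^ i * (SOME x. x \<in> C) j)"

definition obs_i where
  "obs_i r D q n i c = rho r D (Suc q) i (obs r D q n c)"

end

theory Submission
  imports Defs
begin

lemma cont_ball0:
  assumes "f holomorphic_on ball 0 e" "e > 0"
  shows "continuous (at 0) f"
proof -
  have "continuous_on (ball 0 e) f" using assms holomorphic_on_imp_continuous_on by blast
  then show ?thesis using assms(2) continuous_on_interior[of "ball 0 e" f 0] by (simp add: interior_open)
qed

lemma cont_zero:
  fixes f :: "complex \<Rightarrow> complex"
  assumes "continuous (at 0) f" "eventually (\<lambda>z. z \<noteq> 0 \<longrightarrow> f z = 0) (nhds 0)"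
  shows "f 0 = 0"
proof -
  have 1: "(f \<longlongrightarrow> f 0) (at 0)" using assms(1) by (simp add: continuous_at)
  have "eventually (\<lambda>z. f z = 0) (at 0)" using assms(2) by (simp add: eventually_at_filter)
  then have 2: "(f \<longlongrightarrow> 0) (at 0)" by (simp add: tendsto_eventually)
  show ?thesis using tendsto_unique[OF _ 1 2] by simp
qed

lemma app_cont:
  assumes "\<And>i j. continuous (at 0) (\<lambda>z. M z i j)" "\<And>j. continuous (at 0) (\<lambda>z. x z j)"
  shows "continuous (at 0) (\<lambda>z. app m k (M z) (x z) i)"
  unfolding app_def using assms by (cases "i < k") (auto intro!: continuous_intros)

lemma app_add: "app m k M (\<lambda>j. x j + y j) = (\<lambda>i. app m k M x i + app m k M y i)"
  by (auto simp: app_def fun_eq_iff distrib_left sum.distrib)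
lemma app_diff: "app m k M (\<lambda>j. x j - y j) = (\<lambda>i. app m k M x i - app m k M y i)"
  by (auto simp: app_def fun_eq_iff right_diff_distrib sum_subtractf)
lemma app_scale: "app m k M (\<lambda>j. c * x j) = (\<lambda>i. c * app m k M x i)"
  by (auto simp: app_def fun_eq_iff sum_distrib_left mult.left_commute)
lemma app_zero: "app m k M (\<lambda>j. 0) = (\<lambda>i. 0)"
  by (auto simp: app_def fun_eq_iff)
lemma app_minus: "app m k M (\<lambda>j. - x j) = (\<lambda>i. - app m k M x i)"
  by (auto simp: app_def fun_eq_iff sum_negf)


lemma vec_zero: "vec m (\<lambda>_. 0)" by (simp add: vec_def)
lemma vec_minus: "vec m x \<Longrightarrow> vec m (\<lambda>j. - x j)" by (simp add: vec_def)
lemma vec_add: "vec m x \<Longrightarrow> vec m y \<Longrightarrow> vec m (\<lambda>j. x j + y j)" by (simp add: vec_def)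

lemma frel_refl: "fcyc r D p x \<Longrightarrow> (x, x) \<in> frel r D p"
  unfolding frel_def by (auto intro!: exI[of _ "\<lambda>_. 0"] simp: vec_zero app_zero)

lemma frel_sym: assumes "(x, y) \<in> frel r D p" shows "(y, x) \<in> frel r D p"
proof -
  from assms obtain y' where h: "fcyc r D p x" "fcyc r D p y" "vec (r (p - 1)) y'"
    "(\<lambda>i. x i - y i) = (if p = 0 then (\<lambda>_. 0) else app (r (p - 1)) (r p) (D (p - 1) 0) y')"
    unfolding frel_def by auto
  have "(\<lambda>i. y i - x i) = (if p = 0 then (\<lambda>_. 0) else app (r (p - 1)) (r p) (D (p - 1) 0) (\<lambda>j. - y' j))"
    using h(4) by (auto simp: app_minus fun_eq_iff split: if_splits) (metis minus_diff_eq)+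
  then show ?thesis unfolding frel_def using h vec_minus by blast
qed

lemma frel_trans: assumes "(x, y) \<in> frel r D p" "(y, u) \<in> frel r D p" shows "(x, u) \<in> frel r D p"
proof -
  from assms(1) obtain y' where h: "fcyc r D p x" "fcyc r D p y" "vec (r (p - 1)) y'"
    "(\<lambda>i. x i - y i) = (if p = 0 then (\<lambda>_. 0) else app (r (p - 1)) (r p) (D (p - 1) 0) y')"
    unfolding frel_def by auto
  from assms(2) obtain u' where k: "fcyc r D p u" "vec (r (p - 1)) u'"
    "(\<lambda>i. y i - u i) = (if p = 0 then (\<lambda>_. 0) else app (r (p - 1)) (r p) (D (p - 1) 0) u')"
    unfolding frel_def by auto
  have "(\<lambda>i. x i - u i) = (if p = 0 then (\<lambda>_. 0) else app (r (p - 1)) (r p) (D (p - 1) 0) (\<lambda>j. y' j + u' j))"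
  proof (rule ext)
    fix i
    have "x i - u i = (x i - y i) + (y i - u i)" by simp
    then show "x i - u i = (if p = 0 then (\<lambda>_. 0) else app (r (p - 1)) (r p) (D (p - 1) 0) (\<lambda>j. y' j + u' j)) i"
      using fun_cong[OF h(4), of i] fun_cong[OF k(3), of i] by (auto simp: app_add split: if_splits)
  qed
  then show ?thesis unfolding frel_def using h k vec_add by blast
qed

lemma fclass_eq: assumes "(x, y) \<in> frel r D p" shows "fclass r D p x = fclass r D p y"
  unfolding fclass_def using assms frel_sym frel_trans by blast

lemma fclass_mem: "y \<in> fclass r D p x \<Longrightarrow> (x, y) \<in> frel r D p"
  unfolding fclass_def by auto


lemma germ_cont: "germ r p v \<Longrightarrow> continuous (at 0) (\<lambda>z. v z i)"
  unfolding germ_def using cont_ball0 by blast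

lemma D_cont: "is_hol_complex (ball 0 R) N r D \<Longrightarrow> R > 0 \<Longrightarrow> continuous (at 0) (\<lambda>z. D q z i j)"
  unfolding is_hol_complex_def using cont_ball0 by blast

lemma dsec_cont: "is_hol_complex (ball 0 R) N r D \<Longrightarrow> R > 0 \<Longrightarrow> germ r p v
   \<Longrightarrow> continuous (at 0) (\<lambda>z. dsec r D q v z i)"
  unfolding dsec_def by (rule app_cont) (auto intro: D_cont germ_cont)

lemma ball_ev: "R > 0 \<Longrightarrow> eventually (\<lambda>z. z \<in> ball (0::complex) R) (nhds 0)"
  by (rule eventually_nhds_in_open) auto

lemma dd_zero: "is_hol_complex (ball 0 R) N r D \<Longrightarrow> z \<in> ball 0 R \<Longrightarrow>
  app (r (Suc q)) (r (Suc (Suc q))) (D (Suc q) z) (app (r q) (r (Suc q)) (D q z) x) = (\<lambda>_. 0)"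
  unfolding is_hol_complex_def by blast

lemma fcyc_v:
  assumes hc: "is_hol_complex (ball 0 R) N r D" and R: "R > 0"
    and gv: "germ r (Suc q) v" and ev: "evq (dsec r D q s) (tpow k v)"
  shows "fcyc r D (Suc q) (v 0)"
proof -
  have "app (r (Suc q)) (r (Suc (Suc q))) (D (Suc q) 0) (v 0) i = 0" for i
  proof -
    let ?f = "\<lambda>z. dsec r D (Suc q) v z i"
    have c: "continuous (at 0) ?f" using dsec_cont[OF hc R gv] .
    have "eventually (\<lambda>z. z \<noteq> 0 \<longrightarrow> ?f z = 0) (nhds 0)"
      using ev[unfolded evq_def] ball_ev[OF R]
    proof eventually_elim
      case (elim z)
      have "z ^ k * ?f z = app (r (Suc q)) (r (Suc (Suc q))) (D (Suc q) z) (\<lambda>j. z ^ k * v z j) i"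
        by (simp add: dsec_def app_scale)
      also have "(\<lambda>j. z ^ k * v z j) = dsec r D q s z" using elim(1) by (simp add: tpow_def)
      also have "app (r (Suc q)) (r (Suc (Suc q))) (D (Suc q) z) (dsec r D q s z) i = 0"
        using dd_zero[OF hc elim(2)] by (simp add: dsec_def)
      finally show ?case by auto
    qed
    from cont_zero[OF c this] show ?thesis by (simp add: dsec_def)
  qed
  then show ?thesis using gv unfolding fcyc_def germ_def by auto
qed

lemma obs_welldef:
  assumes hc: "is_hol_complex (ball 0 R) N r D" and R: "R > 0"
    and st: "(s, s') \<in> trel r D q k"
    and gv: "germ r (Suc q) v" and gv': "germ r (Suc q) v'"
    and ev: "evq (dsec r D q s) (tpow k v)" and ev': "evq (dsec r D q s') (tpow k v')"
  shows "(v 0, v' 0) \<in> frel r D (Suc q)"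
proof -
  from st obtain g w where gg: "germ r (q - 1) g" and gw: "germ r q w" and
    E: "evq (\<lambda>z i. s z i - s' z i)
             (\<lambda>z i. (if q = 0 then 0 else dsec r D (q - 1) g z i) + z ^ k * w z i)"
    unfolding trel_def by auto
  have key: "v 0 i - v' 0 i = dsec r D q w 0 i" for i
  proof -
    let ?f = "\<lambda>z. v z i - v' z i - dsec r D q w z i"
    have c: "continuous (at 0) ?f"
      using germ_cont[OF gv] germ_cont[OF gv'] dsec_cont[OF hc R gw] by (intro continuous_intros)
    have "eventually (\<lambda>z. z \<noteq> 0 \<longrightarrow> ?f z = 0) (nhds 0)"
      using E[unfolded evq_def] ev[unfolded evq_def] ev'[unfolded evq_def] ball_ev[OF R]
    proof eventually_elim
      case (elim z)
      let ?T = "\<lambda>j. (if q = 0 then 0 else dsec r D (q - 1) g z j)"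
      have sz: "s z = (\<lambda>j. s' z j + (?T j + z ^ k * w z j))"
        using elim(1) by (auto simp: fun_eq_iff dest: fun_cong) (metis diff_eq_eq add.commute)+
      have T0: "app (r q) (r (Suc q)) (D q z) ?T i = 0"
      proof (cases q)
        case 0 then show ?thesis by (simp add: app_zero)
      next
        case (Suc q')
        then show ?thesis using dd_zero[OF hc elim(4), of q' "g z"] by (simp add: dsec_def)
      qed
      have "dsec r D q s z i = app (r q) (r (Suc q)) (D q z) (s z) i" by (simp add: dsec_def)
      also have "\<dots> = app (r q) (r (Suc q)) (D q z) (s' z) i + app (r q) (r (Suc q)) (D q z) ?T i
          + z ^ k * app (r q) (r (Suc q)) (D q z) (w z) i"
        by (simp only: sz app_add app_scale add.assoc)
      also have "\<dots> = dsec r D q s' z i + z ^ k * dsec r D q w z i"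
        by (simp only: T0) (simp add: dsec_def)
      finally have "dsec r D q s z i = dsec r D q s' z i + z ^ k * dsec r D q w z i" .
      then have "z ^ k * v z i = z ^ k * v' z i + z ^ k * dsec r D q w z i"
        using elim(2,3) by (simp add: tpow_def)
      then have "z ^ k * ?f z = 0" by (simp add: algebra_simps)
      then show ?case by auto
    qed
    from cont_zero[OF c this] show ?thesis by simp
  qed
  have "fcyc r D (Suc q) (v 0)" using fcyc_v[OF hc R gv ev] .
  moreover have "fcyc r D (Suc q) (v' 0)" using fcyc_v[OF hc R gv' ev'] .
  moreover have "vec (r q) (w 0)" using gw unfolding germ_def by auto
  moreover have "(\<lambda>i. v 0 i - v' 0 i) = app (r q) (r (Suc q)) (D q 0) (w 0)"
    using key by (simp add: dsec_def fun_eq_iff)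
  ultimately show ?thesis unfolding frel_def by auto
qed


lemma germ_zero: "germ r p (\<lambda>z j. 0)"
  unfolding germ_def by (auto simp: vec_def intro!: exI[of _ 1])

lemma germ_lin:
  assumes "vec (r p) \<sigma>" "germ r p w"
  shows "germ r p (\<lambda>z i. \<sigma> i - z * w z i)"
proof -
  from assms(2) obtain e where e: "e > 0" "\<And>i. (\<lambda>z. w z i) holomorphic_on ball 0 e" "\<And>z. vec (r p) (w z)"
    unfolding germ_def by auto
  have "(\<lambda>z. \<sigma> i - z * w z i) holomorphic_on ball 0 e" for i
    using e(2)[of i] by (intro holomorphic_intros)
  moreover have "vec (r p) (\<lambda>i. \<sigma> i - z * w z i)" for z
    using assms(1) e(3)[of z] by (simp add: vec_def)
  ultimately show ?thesis unfolding germ_def using e(1) by blast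
qed

lemma trel_refl: "tcyc r D q k s \<Longrightarrow> (s, s) \<in> trel r D q k"
  unfolding trel_def
  by (auto intro!: exI[of _ "\<lambda>z j. 0"] simp: germ_zero evq_def dsec_def app_def fun_eq_iff)

lemma tcyc_zero: "tcyc r D q k (\<lambda>z j. 0)"
  unfolding tcyc_def divisible_def
  by (auto intro!: exI[of _ "\<lambda>z j. 0"] simp: germ_zero evq_def dsec_def app_zero tpow_def)

theorem proposition2p6:
  fixes R :: real and N q n :: nat and r :: "nat \<Rightarrow> nat"
    and D :: "nat \<Rightarrow> complex \<Rightarrow> nat \<Rightarrow> nat \<Rightarrow> complex"
    and c :: "(complex \<Rightarrow> nat \<Rightarrow> complex) set"
  assumes "R > 0"
    and "is_hol_complex (ball 0 R) N r D"
    and "q < N" and "1 \<le> n"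
    and "c \<in> Htrunc r D q n"
    and "obs r D q n c \<noteq> fzero r D (Suc q)"
  shows "\<exists>n' c'. 1 \<le> n' \<and> n' \<le> n \<and> c' \<in> Htrunc r D q n' \<and>
           obs_i r D q n' (n' - 1) c' = rho r D (Suc q) (n' - 1) (obs r D q n c) \<and>
           rho r D (Suc q) (n' - 1) (obs r D q n c) \<noteq> tzero r D (Suc q) n'"
proof -
  note R = assms(1) and hc = assms(2)
  from assms(5) obtain s0 where s0: "tcyc r D q n s0" "c = trel r D q n `` {s0}"
    unfolding Htrunc_def by (auto elim!: quotientE)
  have s0c: "s0 \<in> c" using s0 trel_refl by blast
  from s0(1) obtain u where u: "germ r (Suc q) u" "evq (dsec r D q s0) (tpow n u)"
    unfolding tcyc_def divisible_def by auto
  define v0 where "v0 = (SOME v. germ r (Suc q) v \<and> (\<exists>s\<in>c. evq (dsec r D q s) (tpow n v)))"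
  have "germ r (Suc q) v0 \<and> (\<exists>s\<in>c. evq (dsec r D q s) (tpow n v0))"
    unfolding v0_def by (rule someI[of _ u]) (use u s0c in blast)
  then obtain s1 where v0: "germ r (Suc q) v0" and s1: "s1 \<in> c" "evq (dsec r D q s1) (tpow n v0)"
    by blast
  have obsc: "obs r D q n c = fclass r D (Suc q) (v0 0)"
    unfolding obs_def v0_def ..
  have fv0: "fcyc r D (Suc q) (v0 0)" using fcyc_v[OF hc R v0 s1(2)] .
  define \<sigma> where "\<sigma> = (SOME x. x \<in> obs r D q n c)"
  have "v0 0 \<in> obs r D q n c" unfolding obsc fclass_def using frel_refl[OF fv0] by blast
  then have "\<sigma> \<in> obs r D q n c" unfolding \<sigma>_def by (rule someI[of "\<lambda>x. x \<in> obs r D q n c"])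
  then have v0\<sigma>: "(v0 0, \<sigma>) \<in> frel r D (Suc q)" unfolding obsc by (rule fclass_mem)
  have obsc\<sigma>: "obs r D q n c = fclass r D (Suc q) \<sigma>" using obsc fclass_eq[OF v0\<sigma>] by simp
  have f\<sigma>: "fcyc r D (Suc q) \<sigma>" using v0\<sigma> unfolding frel_def by auto
  define Good where "Good k \<longleftrightarrow> 1 \<le> k \<and> (\<exists>\<beta> v. tcyc r D q k \<beta> \<and> germ r (Suc q) v \<and>
      evq (dsec r D q \<beta>) (tpow k v) \<and> (v 0, \<sigma>) \<in> frel r D (Suc q))" for k
  have s1t: "tcyc r D q n s1" using s1(1) s0(2) unfolding trel_def by auto
  have Gn: "Good n" unfolding Good_def using assms(4) s1t v0 s1(2) v0\<sigma> by blast
  define n' where "n' = (LEAST k. Good k)"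
  have Gn': "Good n'" unfolding n'_def using Gn by (rule LeastI)
  have n'n: "n' \<le> n" unfolding n'_def using Gn by (rule Least_le)
  have minim: "\<not> Good k" if "k < n'" for k using not_less_Least[OF that[unfolded n'_def]] .
  from Gn' obtain \<beta> v where n'1: "1 \<le> n'" and \<beta>: "tcyc r D q n' \<beta>" and gv: "germ r (Suc q) v"
    and ev: "evq (dsec r D q \<beta>) (tpow n' v)" and v\<sigma>: "(v 0, \<sigma>) \<in> frel r D (Suc q)"
    unfolding Good_def by blast
  define c' where "c' = tclass r D q n' \<beta>"
  have c'H: "c' \<in> Htrunc r D q n'"
    unfolding c'_def Htrunc_def tclass_def by (rule quotientI) (use \<beta> in simp)
  have \<beta>c': "\<beta> \<in> c'" unfolding c'_def tclass_def using trel_refl[OF \<beta>] by blast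
  define v2 where "v2 = (SOME v. germ r (Suc q) v \<and> (\<exists>s\<in>c'. evq (dsec r D q s) (tpow n' v)))"
  have "germ r (Suc q) v2 \<and> (\<exists>s\<in>c'. evq (dsec r D q s) (tpow n' v2))"
    unfolding v2_def by (rule someI[of _ v]) (use gv ev \<beta>c' in blast)
  then obtain s2 where v2: "germ r (Suc q) v2" and s2: "s2 \<in> c'" "evq (dsec r D q s2) (tpow n' v2)"
    by blast
  have "(\<beta>, s2) \<in> trel r D q n'" using s2(1) unfolding c'_def tclass_def by auto
  from obs_welldef[OF hc R this gv v2 ev s2(2)] have "(v 0, v2 0) \<in> frel r D (Suc q)" .
  then have "(v2 0, \<sigma>) \<in> frel r D (Suc q)" using v\<sigma> frel_sym frel_trans by blast
  then have obsc': "obs r D q n' c' = obs r D q n c"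
  proof -
    have "obs r D q n' c' = fclass r D (Suc q) (v2 0)" unfolding obs_def v2_def ..
    also have "\<dots> = fclass r D (Suc q) \<sigma>" by (rule fclass_eq) fact
    finally show ?thesis using obsc\<sigma> by simp
  qed
  have nz: "rho r D (Suc q) (n' - 1) (obs r D q n c) \<noteq> tzero r D (Suc q) n'"
  proof
    assume eq: "rho r D (Suc q) (n' - 1) (obs r D q n c) = tzero r D (Suc q) n'"
    have "(\<lambda>z j. 0) \<in> tzero r D (Suc q) n'"
      unfolding tzero_def tclass_def using trel_refl[OF tcyc_zero] by blast
    then have "(\<lambda>z j. 0) \<in> tclass r D (Suc q) n' (\<lambda>z j. z ^ (n' - 1) * \<sigma> j)"
      using eq n'1 unfolding rho_def \<sigma>_def[symmetric] by simp
    then have "((\<lambda>z j. z ^ (n' - 1) * \<sigma> j), (\<lambda>z j. 0)) \<in> trel r D (Suc q) n'"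
      unfolding tclass_def by auto
    then obtain g w where gg: "germ r q g" and gw: "germ r (Suc q) w" and
      E: "evq (\<lambda>z i. z ^ (n' - 1) * \<sigma> i - 0) (\<lambda>z i. dsec r D q g z i + z ^ n' * w z i)"
      unfolding trel_def by auto
    show False
    proof (cases "n' = 1")
      case True
      have "(\<lambda>i. \<sigma> i) = (\<lambda>i. dsec r D q g 0 i + 0 ^ n' * w 0 i)"
        using eventually_nhds_x_imp_x[OF E[unfolded evq_def]] True by simp
      then have "(\<lambda>i. \<sigma> i - (\<lambda>_. 0) i) = app (r q) (r (Suc q)) (D q 0) (g 0)"
        using True by (simp add: dsec_def)
      moreover have "fcyc r D (Suc q) (\<lambda>_. 0)" by (simp add: fcyc_def vec_zero app_zero)
      moreover have "vec (r q) (g 0)" using gg unfolding germ_def by auto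
      ultimately have "(\<sigma>, \<lambda>_. 0) \<in> frel r D (Suc q)" unfolding frel_def using f\<sigma> by auto
      then have "obs r D q n c = fzero r D (Suc q)" unfolding obsc\<sigma> fzero_def by (rule fclass_eq)
      then show False using assms(6) by simp
    next
      case False
      define v' where "v' = (\<lambda>z i. \<sigma> i - z * w z i)"
      have gv': "germ r (Suc q) v'" unfolding v'_def
        using germ_lin[OF _ gw] f\<sigma> unfolding fcyc_def by blast
      have evg: "evq (dsec r D q g) (tpow (n' - 1) v')"
        unfolding evq_def using E[unfolded evq_def]
      proof eventually_elim
        case (elim z)
        have "dsec r D q g z i = tpow (n' - 1) v' z i" for i
        proof -
          have "z ^ (n' - 1) * \<sigma> i = dsec r D q g z i + z ^ n' * w z i"
            using fun_cong[OF elim, of i] by simp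
          moreover have "z ^ n' = z ^ (n' - 1) * z" using n'1
            by (metis One_nat_def Suc_pred less_le_trans power_Suc2 zero_less_one)
          ultimately show ?thesis unfolding tpow_def v'_def by (simp add: algebra_simps)
        qed
        then show ?case by auto
      qed
      have "Good (n' - 1)" unfolding Good_def
      proof (intro conjI exI)
        show "1 \<le> n' - 1" using False n'1 by simp
        show "tcyc r D q (n' - 1) g" unfolding tcyc_def divisible_def using gg gv' evg by blast
        show "germ r (Suc q) v'" by fact
        show "evq (dsec r D q g) (tpow (n' - 1) v')" by fact
        show "(v' 0, \<sigma>) \<in> frel r D (Suc q)" unfolding v'_def using frel_refl[OF f\<sigma>] by simp
      qed
      then show False using minim[of "n' - 1"] n'1 by simp
    qed
  qed
  show ?thesis
    by (rule exI[of _ n'], rule exI[of _ c']) (use n'1 n'n c'H obsc' nz in \<open>simp add: obs_i_def\<close>)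
qed

end
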